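(* Let $\mathcal D$ be the derivation of $C^\infty(\mathfrak M,\mathbb R)$ given by $\mathcal D[F](g,J)=\frac{d}{dt}\big|_{t=0}F(g,J+t\mathbf 1_n)$, where $\mathbf 1_n$ is the $n\times n$ identity matrix, and for a bracket $\{\ ,\ \}$ define the Lie derivative bracket $\{F,H\}^{\mathcal D}=\mathcal D[\{F,H\}]-\{\mathcal D[F],H\}-\{F,\mathcal D[H]\}$. Then $\{F,H\}_1=\{F,H\}_2^{\mathcal D}$ for all $F,H\in C^\infty(\mathfrak M,\mathbb R)$. Consequently the Poisson brackets $\{\ ,\ \}_1$ and $\{\ ,\ \}_2$ are compatible, i.e. every real linear combination of them is again a Poisson bracket.
   Context: $G=\mathrm{GL}(n,\mathbb C)$ is regarded as a real Lie group with Lie algebra $\mathcal G=\mathfrak{gl}(n,\mathbb C)$ regarded as a real Lie algebra, equipped with the bilinear form $\langle X,Y\rangle=\Re\operatorname{tr}(XY)$. Every $X\in\mathcal G$ decomposes uniquely as $X=X_>+X_0+X_<$ (strictly upper triangular, diagonal, strictly lower triangular parts). Set $r(X)=\frac12(X_>-X_<)$, $r_\pm=r\pm\frac12\mathrm{id}$. Let $\mathfrak M=G\times\mathcal G=\{(g,J)\}$. For $F\in C^\infty(\mathfrak M,\mathbb R)$ define $\mathcal G$-valued derivatives by $\langle\nabla_1F(g,J),X\rangle=\frac{d}{dt}\big|_{t=0}F(e^{tX}g,J)$, $\langle\nabla_1'F(g,J),X\rangle=\frac{d}{dt}\big|_{t=0}F(ge^{tX},J)$, $\langle d_2F(g,J),X\rangle=\frac{d}{dt}\big|_{t=0}F(g,J+tX)$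 for all $X\in\mathcal G$, and $\nabla_2F=J\,d_2F$, $\nabla_2'F=(d_2F)\,J$. The Poisson brackets are $\{F,H\}_1=\langle \nabla_1F,d_2H\rangle-\langle\nabla_1H,d_2F\rangle+\langle J,[d_2F,d_2H]\rangle$ and $\{F,H\}_2=\langle r\nabla_1F,\nabla_1H\rangle-\langle r\nabla_1'F,\nabla_1'H\rangle+\langle \nabla_2F-\nabla_2'F, r_+\nabla_2'H-r_-\nabla_2H\rangle+\langle\nabla_1F, r_+\nabla_2'H-r_-\nabla_2H\rangle-\langle\nabla_1H, r_+\nabla_2'F-r_-\nabla_2F\rangle$ (derivatives at $(g,J)$). *)

theory Defs
  imports "HOL-Analysis.Analysis"
begin

type_synonym 'n cmat = "complex^'n^'n"
type_synonym 'n pt = "'n cmat \<times> 'n cmat"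

text \<open>Smooth (C-infinity) real functions on an open set S of a real normed space:
all iterated Frechet derivatives exist. d vs x is the iterated derivative in the
directions vs.\<close>
definition smooth_on :: "'a::real_normed_vector set \<Rightarrow> ('a \<Rightarrow> real) \<Rightarrow> bool" where
  "smooth_on S f \<longleftrightarrow> (\<exists>d :: 'a list \<Rightarrow> 'a \<Rightarrow> real.
      (\<forall>x\<in>S. d [] x = f x) \<and>
      (\<forall>vs. \<forall>x\<in>S. (d vs has_derivative (\<lambda>v. d (v # vs) x)) (at x)))"

definition MM :: "'n::finite pt set" where
  "MM = {(g, J). invertible g}"

definition mpow :: "'n::finite cmat \<Rightarrow> nat \<Rightarrow> 'n cmat" where
  "mpow X k = (((**) X) ^^ k) (mat 1)"

definition mexp :: "'n::finite cmat \<Rightarrow> 'n cmat" where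
  "mexp X = (\<Sum>k. (1 / fact k) *\<^sub>R mpow X k)"

definition ip :: "'n::finite cmat \<Rightarrow> 'n cmat \<Rightarrow> real" where
  "ip X Y = Re (trace (X ** Y))"

definition upper :: "'n::{finite,linorder} cmat \<Rightarrow> 'n cmat" where
  "upper X = (\<chi> i j. if i < j then X $ i $ j else 0)"

definition lower :: "'n::{finite,linorder} cmat \<Rightarrow> 'n cmat" where
  "lower X = (\<chi> i j. if j < i then X $ i $ j else 0)"

definition rr :: "'n::{finite,linorder} cmat \<Rightarrow> 'n cmat" where
  "rr X = (1/2) *\<^sub>R (upper X - lower X)"

definition rplus :: "'n::{finite,linorder} cmat \<Rightarrow> 'n cmat" where
  "rplus X = rr X + (1/2) *\<^sub>R X"

definition rminus :: "'n::{finite,linorder} cmat \<Rightarrow> 'n cmat" where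
  "rminus X = rr X - (1/2) *\<^sub>R X"

definition nabla1 :: "('n::finite pt \<Rightarrow> real) \<Rightarrow> 'n pt \<Rightarrow> 'n cmat" where
  "nabla1 F p = (THE Y. \<forall>X. ip Y X = deriv (\<lambda>t. F (mexp (t *\<^sub>R X) ** fst p, snd p)) 0)"

definition nabla1' :: "('n::finite pt \<Rightarrow> real) \<Rightarrow> 'n pt \<Rightarrow> 'n cmat" where
  "nabla1' F p = (THE Y. \<forall>X. ip Y X = deriv (\<lambda>t. F (fst p ** mexp (t *\<^sub>R X), snd p)) 0)"

definition d2 :: "('n::finite pt \<Rightarrow> real) \<Rightarrow> 'n pt \<Rightarrow> 'n cmat" where
  "d2 F p = (THE Y. \<forall>X. ip Y X = deriv (\<lambda>t. F (fst p, snd p + t *\<^sub>R X)) 0)"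

definition nabla2 :: "('n::finite pt \<Rightarrow> real) \<Rightarrow> 'n pt \<Rightarrow> 'n cmat" where
  "nabla2 F p = snd p ** d2 F p"

definition nabla2' :: "('n::finite pt \<Rightarrow> real) \<Rightarrow> 'n pt \<Rightarrow> 'n cmat" where
  "nabla2' F p = d2 F p ** snd p"

definition bracket1 :: "('n::finite pt \<Rightarrow> real) \<Rightarrow> ('n pt \<Rightarrow> real) \<Rightarrow> 'n pt \<Rightarrow> real" where
  "bracket1 F H p = ip (nabla1 F p) (d2 H p) - ip (nabla1 H p) (d2 F p)
      + ip (snd p) (d2 F p ** d2 H p - d2 H p ** d2 F p)"

definition bracket2 :: "('n::{finite,linorder} pt \<Rightarrow> real) \<Rightarrow> ('n pt \<Rightarrow> real) \<Rightarrow> 'n pt \<Rightarrow> real" where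
  "bracket2 F H p =
      ip (rr (nabla1 F p)) (nabla1 H p) - ip (rr (nabla1' F p)) (nabla1' H p)
    + ip (nabla2 F p - nabla2' F p) (rplus (nabla2' H p) - rminus (nabla2 H p))
    + ip (nabla1 F p) (rplus (nabla2' H p) - rminus (nabla2 H p))
    - ip (nabla1 H p) (rplus (nabla2' F p) - rminus (nabla2 F p))"

definition DD :: "('n::finite pt \<Rightarrow> real) \<Rightarrow> 'n pt \<Rightarrow> real" where
  "DD F p = deriv (\<lambda>t. F (fst p, snd p + t *\<^sub>R mat 1)) 0"

definition lieD ::
  "((('n::finite pt \<Rightarrow> real) \<Rightarrow> ('n pt \<Rightarrow> real) \<Rightarrow> 'n pt \<Rightarrow> real))
    \<Rightarrow> ('n pt \<Rightarrow> real) \<Rightarrow> ('n pt \<Rightarrow> real) \<Rightarrow> 'n pt \<Rightarrow> real" where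
  "lieD P F H p = DD (P F H) p - P (DD F) H p - P F (DD H) p"

definition poisson_bracket ::
  "(('n::finite pt \<Rightarrow> real) \<Rightarrow> ('n pt \<Rightarrow> real) \<Rightarrow> 'n pt \<Rightarrow> real) \<Rightarrow> bool" where
  "poisson_bracket P \<longleftrightarrow>
     (\<forall>F H. smooth_on MM F \<longrightarrow> smooth_on MM H \<longrightarrow> smooth_on MM (P F H)) \<and>
     (\<forall>F H K a b. smooth_on MM F \<longrightarrow> smooth_on MM H \<longrightarrow> smooth_on MM K \<longrightarrow>
        (\<forall>p\<in>MM.
          P (\<lambda>q. a * F q + b * H q) K p = a * P F K p + b * P H K p \<and>
          P F H p = - P H F p \<and>
          P F (\<lambda>q. H q * K q) p = P F H p * K p + H p * P F K p \<and>
          P F (P H K) p + P H (P K F) p + P K (P F H) p = 0))"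

end

theory Submission
  imports Defs
begin


definition sw :: "'a::real_normed_vector set \<Rightarrow> ('a \<Rightarrow> real) \<Rightarrow> ('a list \<Rightarrow> 'a \<Rightarrow> real) \<Rightarrow> bool" where
  "sw S f d \<longleftrightarrow> (\<forall>x\<in>S. d [] x = f x) \<and> (\<forall>vs. \<forall>x\<in>S. (d vs has_derivative (\<lambda>v. d (v # vs) x)) (at x))"

lemma smooth_sw: "smooth_on S f \<longleftrightarrow> (\<exists>d. sw S f d)"
  by (simp add: smooth_on_def sw_def)

lemma sw_der: "sw S f d \<Longrightarrow> x \<in> S \<Longrightarrow> (d vs has_derivative (\<lambda>v. d (v # vs) x)) (at x)"
  by (simp add: sw_def)

lemma sw_lin: "sw S f d \<Longrightarrow> x \<in> S \<Longrightarrow> bounded_linear (\<lambda>v. d (v # vs) x)"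
  using sw_der has_derivative_bounded_linear by blast

lemma sw_line:
  assumes "sw S f d" "y + s *\<^sub>R a \<in> S"
  shows "((\<lambda>s. d vs (y + s *\<^sub>R a)) has_real_derivative d (a # vs) (y + s *\<^sub>R a)) (at s)"
proof -
  have 1: "((\<lambda>s. y + s *\<^sub>R a) has_derivative (\<lambda>s. s *\<^sub>R a)) (at s)"
    by (auto intro!: derivative_eq_intros)
  have 2: "(d vs has_derivative (\<lambda>v. d (v # vs) (y + s *\<^sub>R a))) (at (y + s *\<^sub>R a))"
    using sw_der[OF assms] .
  have 3: "((\<lambda>s. d vs (y + s *\<^sub>R a)) has_derivative (\<lambda>t. d ((t *\<^sub>R a) # vs) (y + s *\<^sub>R a))) (at s)"
    using has_derivative_compose[OF 1 2] .
  interpret bounded_linear "\<lambda>v. d (v # vs) (y + s *\<^sub>R a)" using sw_lin[OF assms] .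
  show ?thesis
    by (rule has_derivative_imp_has_field_derivative[OF 3]) (simp add: scale)
qed

lemma schwarz_aux:
  assumes sw: "sw S f d" and bal: "ball x r \<subseteq> S" and h: "0 < h" "h * (norm a + norm b) < r"
  shows "\<exists>y. dist y x \<le> h * (norm a + norm b) \<and>
     d [] (x + h *\<^sub>R a + h *\<^sub>R b) - d [] (x + h *\<^sub>R a) - d [] (x + h *\<^sub>R b) + d [] x = h*h * d [b,a] y"
proof -
  have inS: "x + s *\<^sub>R a + t *\<^sub>R b \<in> S" and dl: "dist (x + s *\<^sub>R a + t *\<^sub>R b) x \<le> h * (norm a + norm b)"
    if "0 \<le> s" "s \<le> h" "0 \<le> t" "t \<le> h" for s t
  proof -
    have "dist (x + s *\<^sub>R a + t *\<^sub>R b) x = norm (s *\<^sub>R a + t *\<^sub>R b)" by (simp add: dist_norm)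
    also have "\<dots> \<le> norm (s *\<^sub>R a) + norm (t *\<^sub>R b)" by (rule norm_triangle_ineq)
    also have "\<dots> = s * norm a + t * norm b" using that by simp
    also have "\<dots> \<le> h * norm a + h * norm b" using that by (intro add_mono mult_right_mono) auto
    finally show "dist (x + s *\<^sub>R a + t *\<^sub>R b) x \<le> h * (norm a + norm b)" by (simp add: algebra_simps)
    then show "x + s *\<^sub>R a + t *\<^sub>R b \<in> S" using bal h by (auto simp: dist_commute)
  qed
  define \<phi> where "\<phi> s = d [] ((x + h *\<^sub>R b) + s *\<^sub>R a) - d [] (x + s *\<^sub>R a)" for s
  have "DERIV \<phi> s :> d [a] ((x + h *\<^sub>R b) + s *\<^sub>R a) - d [a] (x + s *\<^sub>R a)" if "0 \<le> s" "s \<le> h" for s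
  proof -
    have m1: "(x + h *\<^sub>R b) + s *\<^sub>R a \<in> S" using inS[of s h] that h by (simp add: algebra_simps)
    have m2: "x + s *\<^sub>R a \<in> S" using inS[of s 0] that h by simp
    show ?thesis unfolding \<phi>_def[abs_def]
      by (intro DERIV_diff sw_line[OF sw m1] sw_line[OF sw m2])
  qed
  from MVT2[OF h(1) this] obtain \<xi> where xi: "0 < \<xi>" "\<xi> < h"
    "\<phi> h - \<phi> 0 = (h - 0) * (d [a] ((x + h *\<^sub>R b) + \<xi> *\<^sub>R a) - d [a] (x + \<xi> *\<^sub>R a))" by blast
  define \<psi> where "\<psi> t = d [a] ((x + \<xi> *\<^sub>R a) + t *\<^sub>R b)" for t
  have "DERIV \<psi> t :> d [b,a] ((x + \<xi> *\<^sub>R a) + t *\<^sub>R b)" if "0 \<le> t" "t \<le> h" for t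
  proof -
    have m1: "(x + \<xi> *\<^sub>R a) + t *\<^sub>R b \<in> S" using inS[of \<xi> t] that xi by simp
    show ?thesis unfolding \<psi>_def[abs_def] by (rule sw_line[OF sw m1])
  qed
  from MVT2[OF h(1) this] obtain \<eta> where eta: "0 < \<eta>" "\<eta> < h"
    "\<psi> h - \<psi> 0 = (h - 0) * d [b,a] ((x + \<xi> *\<^sub>R a) + \<eta> *\<^sub>R b)" by blast
  have e1: "(x + h *\<^sub>R b) + \<xi> *\<^sub>R a = (x + \<xi> *\<^sub>R a) + h *\<^sub>R b" by (simp add: algebra_simps)
  have "d [] (x + h *\<^sub>R a + h *\<^sub>R b) - d [] (x + h *\<^sub>R a) - d [] (x + h *\<^sub>R b) + d [] x = \<phi> h - \<phi> 0"
    unfolding \<phi>_def by (simp add: algebra_simps)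
  also have "\<dots> = h * (\<psi> h - \<psi> 0)" using xi(3) unfolding \<psi>_def e1 by simp
  also have "\<dots> = h * h * d [b,a] ((x + \<xi> *\<^sub>R a) + \<eta> *\<^sub>R b)" using eta(3) by simp
  finally show ?thesis using dl[of \<xi> \<eta>] xi eta by (intro exI[of _ "(x + \<xi> *\<^sub>R a) + \<eta> *\<^sub>R b"]) auto
qed

lemma schwarz:
  assumes sw: "sw S f d" and S: "open S" "x \<in> S"
  shows "d [a,b] x = d [b,a] x"
proof (rule ccontr)
  assume ne: "d [a,b] x \<noteq> d [b,a] x"
  define \<epsilon> where "\<epsilon> = \<bar>d [a,b] x - d [b,a] x\<bar>"
  have ep: "\<epsilon> > 0" using ne by (simp add: \<epsilon>_def)
  obtain r where r: "r > 0" "ball x r \<subseteq> S" using S open_contains_ball by blast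
  have c1: "continuous (at x) (d [a,b])" using sw_der[OF sw S(2), of "[a,b]"] has_derivative_continuous by blast
  have c2: "continuous (at x) (d [b,a])" using sw_der[OF sw S(2), of "[b,a]"] has_derivative_continuous by blast
  obtain \<delta>1 where d1: "\<delta>1 > 0" "\<And>y. dist y x < \<delta>1 \<Longrightarrow> dist (d [a,b] y) (d [a,b] x) < \<epsilon>/2"
    using c1 ep unfolding continuous_at_eps_delta by (meson half_gt_zero)
  obtain \<delta>2 where d2: "\<delta>2 > 0" "\<And>y. dist y x < \<delta>2 \<Longrightarrow> dist (d [b,a] y) (d [b,a] x) < \<epsilon>/2"
    using c2 ep unfolding continuous_at_eps_delta by (meson half_gt_zero)
  define m where "m = min r (min \<delta>1 \<delta>2)"
  have m: "m > 0" using r d1 d2 by (simp add: m_def)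
  define R where "R = norm a + norm b"
  have R: "R \<ge> 0" by (simp add: R_def)
  define h where "h = m / (2 * (R + 1))"
  have h: "h > 0" using m R by (simp add: h_def)
  have hR: "h * R < m"
  proof -
    have "h * R \<le> h * (R + 1)" using h by simp
    also have "\<dots> = m / 2" proof - have "R + 1 > 0" using R by simp then show ?thesis by (simp add: h_def field_simps) qed
    finally show ?thesis using m by simp
  qed
  have hr: "h * (norm a + norm b) < r" and hr': "h * (norm b + norm a) < r"
    using hR unfolding R_def m_def by (auto simp: add.commute)
  obtain y1 where y1: "dist y1 x \<le> h * (norm a + norm b)"
    "d [] (x + h *\<^sub>R a + h *\<^sub>R b) - d [] (x + h *\<^sub>R a) - d [] (x + h *\<^sub>R b) + d [] x = h*h * d [b,a] y1"
    using schwarz_aux[OF sw r(2) h hr] by blast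
  obtain y2 where y2: "dist y2 x \<le> h * (norm b + norm a)"
    "d [] (x + h *\<^sub>R b + h *\<^sub>R a) - d [] (x + h *\<^sub>R b) - d [] (x + h *\<^sub>R a) + d [] x = h*h * d [a,b] y2"
    using schwarz_aux[OF sw r(2) h hr'] by blast
  have "h*h * d [b,a] y1 = h*h * d [a,b] y2" using y1(2) y2(2) by (simp add: algebra_simps)
  then have eq: "d [b,a] y1 = d [a,b] y2" using h by simp
  have "dist y1 x < \<delta>2" "dist y2 x < \<delta>1" using y1(1) y2(1) hR unfolding R_def m_def by (auto simp: add.commute)
  then have "\<bar>d [b,a] y1 - d [b,a] x\<bar> < \<epsilon>/2" "\<bar>d [a,b] y2 - d [a,b] x\<bar> < \<epsilon>/2"
    using d1 d2 by (auto simp: dist_real_def)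
  moreover have "d [a,b] x - d [b,a] x = (d [a,b] x - d [a,b] y2) + (d [b,a] y1 - d [b,a] x)" using eq by simp
  then have "\<bar>d [a,b] x - d [b,a] x\<bar> \<le> \<bar>d [a,b] x - d [a,b] y2\<bar> + \<bar>d [b,a] y1 - d [b,a] x\<bar>"
    by (metis abs_triangle_ineq)
  moreover have "\<bar>d [a,b] x - d [a,b] y2\<bar> = \<bar>d [a,b] y2 - d [a,b] x\<bar>" by (rule abs_minus_commute)
  ultimately have "\<epsilon> < \<epsilon>" unfolding \<epsilon>_def by linarith
  then show False by simp
qed


section \<open>Matrix norms and the exponential\<close>

lemma norm_vec_le_sum: "norm (x :: 'a::real_normed_vector ^ 'n::finite) \<le> (\<Sum>i\<in>UNIV. norm (x $ i))"
  by (simp add: norm_vec_def L2_set_le_sum)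

lemma entry_le: "norm ((A :: 'n::finite cmat) $ i $ j) \<le> norm A"
proof -
  have "norm (A $ i $ j) \<le> norm (A $ i)" by (rule Finite_Cartesian_Product.norm_nth_le)
  also have "\<dots> \<le> norm A" by (rule Finite_Cartesian_Product.norm_nth_le)
  finally show ?thesis .
qed

lemma norm_mm: "norm ((A :: 'n::finite cmat) ** (B :: 'n cmat)) \<le> real (CARD('n))^3 * norm A * norm B"
proof -
  have e: "norm ((A ** B) $ i $ j) \<le> real CARD('n) * (norm A * norm B)" for i j
  proof -
    have "norm ((A ** B) $ i $ j) = norm (\<Sum>k\<in>UNIV. A $ i $ k * B $ k $ j)"
      by (simp add: matrix_matrix_mult_def)
    also have "\<dots> \<le> (\<Sum>k\<in>UNIV. norm (A $ i $ k * B $ k $ j))" by (rule norm_sum)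
    also have "\<dots> \<le> (\<Sum>k\<in>(UNIV::'n set). norm A * norm B)"
      by (intro sum_mono) (simp add: norm_mult, intro mult_mono entry_le, auto)
    also have "\<dots> = real CARD('n) * (norm A * norm B)" by simp
    finally show ?thesis .
  qed
  have r: "norm ((A ** B) $ i) \<le> real CARD('n) * (real CARD('n) * (norm A * norm B))" for i
  proof -
    have "norm ((A ** B) $ i) \<le> (\<Sum>j\<in>UNIV. norm ((A ** B) $ i $ j))" by (rule norm_vec_le_sum)
    also have "\<dots> \<le> (\<Sum>j\<in>(UNIV::'n set). real CARD('n) * (norm A * norm B))" by (intro sum_mono e)
    finally show ?thesis by simp
  qed
  have "norm (A ** B) \<le> (\<Sum>i\<in>UNIV. norm ((A ** B) $ i))" by (rule norm_vec_le_sum)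
  also have "\<dots> \<le> (\<Sum>i\<in>(UNIV::'n set). real CARD('n) * (real CARD('n) * (norm A * norm B)))" by (intro sum_mono r)
  finally show ?thesis by (simp add: power3_eq_cube algebra_simps)
qed

lemma mm_scaleR_left: "((r::real) *\<^sub>R (A :: 'n::finite cmat)) ** B = r *\<^sub>R (A ** B)"
  by (simp add: matrix_matrix_mult_def vec_eq_iff scaleR_sum_right mult_scaleR_left mult_scaleR_right)

lemma mm_scaleR_right: "(A :: 'n::finite cmat) ** ((r::real) *\<^sub>R B) = r *\<^sub>R (A ** B)"
  by (simp add: matrix_matrix_mult_def vec_eq_iff scaleR_sum_right mult_scaleR_left mult_scaleR_right)

lemma mm_add_left: "((A :: 'n::finite cmat) + A') ** B = A ** B + A' ** B"
  by (simp add: matrix_matrix_mult_def vec_eq_iff sum.distrib algebra_simps)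

lemma mm_add_right: "(A :: 'n::finite cmat) ** (B + B') = A ** B + A ** B'"
  by (simp add: matrix_matrix_mult_def vec_eq_iff sum.distrib algebra_simps)

lemma mm_diff_left: "((A :: 'n::finite cmat) - A') ** B = A ** B - A' ** B"
  by (simp add: matrix_matrix_mult_def vec_eq_iff sum_subtractf algebra_simps)

lemma mm_diff_right: "(A :: 'n::finite cmat) ** (B - B') = A ** B - A ** B'"
  by (simp add: matrix_matrix_mult_def vec_eq_iff sum_subtractf algebra_simps)

lemma mm_zero_left: "(0 :: 'n::finite cmat) ** B = 0"
  by (simp add: matrix_matrix_mult_def vec_eq_iff)

lemma mm_zero_right: "(A :: 'n::finite cmat) ** 0 = 0"
  by (simp add: matrix_matrix_mult_def vec_eq_iff)

lemma mm_bound': "norm ((a::'n::finite cmat) ** (b::'n cmat)) \<le> norm a * norm b * real (CARD('n))^3"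
  using norm_mm[of a b] by (simp add: mult_ac)

lemma bb_mm: "bounded_bilinear ((**) :: 'n::finite cmat \<Rightarrow> 'n cmat \<Rightarrow> 'n cmat)"
proof
  fix a a' b b' :: "'n cmat" and r :: real
  show "(a + a') ** b = a ** b + a' ** b" by (rule mm_add_left)
  show "a ** (b + b') = a ** b + a ** b'" by (rule mm_add_right)
  show "(r *\<^sub>R a) ** b = r *\<^sub>R (a ** b)" by (rule mm_scaleR_left)
  show "a ** (r *\<^sub>R b) = r *\<^sub>R (a ** b)" by (rule mm_scaleR_right)
next
  show "\<exists>K. \<forall>(a::'n cmat) (b::'n cmat). norm (a ** b) \<le> norm a * norm b * K"
    by (intro exI allI) (rule mm_bound')
qed


lemma mpow_0[simp]: "mpow X 0 = mat 1" by (simp add: mpow_def)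
lemma mpow_Suc: "mpow X (Suc k) = X ** mpow X k" by (simp add: mpow_def)
lemma mpow_1: "mpow X 1 = X" by (simp add: mpow_Suc)

lemma mpow_scale: "mpow ((t::real) *\<^sub>R X) k = (t ^ k) *\<^sub>R mpow X k"
  by (induction k) (simp_all add: mpow_Suc mm_scaleR_left mm_scaleR_right)

lemma mpow_bound: "norm (mpow (X::'n::finite cmat) k) \<le> norm (mat 1 :: 'n cmat) * (real (CARD('n))^3 * norm X) ^ k"
proof (induction k)
  case 0 then show ?case by simp
next
  case (Suc k)
  have "norm (mpow X (Suc k)) \<le> real (CARD('n))^3 * norm X * norm (mpow X k)"
    unfolding mpow_Suc by (rule norm_mm)
  also have "\<dots> \<le> real (CARD('n))^3 * norm X * (norm (mat 1 :: 'n cmat) * (real (CARD('n))^3 * norm X) ^ k)"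
    by (intro mult_left_mono Suc) auto
  finally show ?case by (simp add: algebra_simps)
qed

lemma mexp_bound:
  fixes X :: "'n::finite cmat"
  defines "N \<equiv> norm (mat 1 :: 'n cmat)" and "c \<equiv> real (CARD('n))^3 * norm X"
  assumes t: "\<bar>t\<bar> \<le> 1"
  shows "norm (mexp (t *\<^sub>R X) - mat 1 - t *\<^sub>R X) \<le> t\<^sup>2 * (\<Sum>k. N * (inverse (fact (k+2)) * c ^ (k+2)))"
proof -
  define u where "u k = (1 / fact k) *\<^sub>R mpow (t *\<^sub>R X) k" for k
  have N0: "N \<ge> 0" by (simp add: N_def)
  have c0: "c \<ge> 0" by (simp add: c_def)
  have su: "summable (\<lambda>k. N * (inverse (fact k) * c ^ k))"
    by (intro summable_mult summable_exp)
  have nu: "norm (u k) \<le> \<bar>t\<bar> ^ k * (N * (inverse (fact k) * c ^ k))" for k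
  proof -
    have "norm (u k) = \<bar>t\<bar> ^ k * (inverse (fact k) * norm (mpow X k))"
      by (simp add: u_def mpow_scale power_abs divide_inverse abs_mult mult_ac)
    also have "\<dots> \<le> \<bar>t\<bar> ^ k * (inverse (fact k) * (N * c ^ k))"
      using mpow_bound[of X k] unfolding N_def c_def by (intro mult_left_mono) auto
    finally show ?thesis by (simp add: algebra_simps)
  qed
  have tk: "\<bar>t\<bar> ^ k \<le> 1" for k using t by (simp add: power_le_one)
  have summ: "summable u"
  proof (rule summable_comparison_test'[OF su])
    fix k :: nat
    have "norm (u k) \<le> \<bar>t\<bar> ^ k * (N * (inverse (fact k) * c ^ k))" by (rule nu)
    also have "\<dots> \<le> 1 * (N * (inverse (fact k) * c ^ k))"
      using N0 c0 tk[of k] by (intro mult_right_mono) auto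
    finally show "norm (u k) \<le> N * (inverse (fact k) * c ^ k)" by simp
  qed
  have me: "mexp (t *\<^sub>R X) = suminf u" unfolding mexp_def u_def[abs_def] ..
  have s1: "summable (\<lambda>k. u (Suc k))" using summ by (simp add: summable_Suc_iff)
  have "(\<Sum>k. u (Suc (Suc k))) = (\<Sum>k. u (Suc k)) - u (Suc 0)"
    using suminf_split_head[OF s1] .
  also have "\<dots> = suminf u - u 0 - u 1" using suminf_split_head[OF summ] by simp
  also have "\<dots> = mexp (t *\<^sub>R X) - mat 1 - t *\<^sub>R X" by (simp add: me u_def mpow_Suc)
  finally have eq: "mexp (t *\<^sub>R X) - mat 1 - t *\<^sub>R X = (\<Sum>k. u (k+2))" by simp
  have su2: "summable (\<lambda>k. N * (inverse (fact (k+2)) * c ^ (k+2)))"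
    using su summable_iff_shift[of "\<lambda>k. N * (inverse (fact k) * c ^ k)" 2] by simp
  have "norm (\<Sum>k. u (k+2)) \<le> (\<Sum>k. t\<^sup>2 * (N * (inverse (fact (k+2)) * c ^ (k+2))))"
  proof (rule norm_suminf_le)
    fix k
    have "norm (u (k+2)) \<le> \<bar>t\<bar> ^ (k+2) * (N * (inverse (fact (k+2)) * c ^ (k+2)))" by (rule nu)
    also have "\<dots> \<le> t\<^sup>2 * (N * (inverse (fact (k+2)) * c ^ (k+2)))"
    proof (rule mult_right_mono)
      have "\<bar>t\<bar> ^ (k+2) = \<bar>t\<bar>^k * t\<^sup>2" by (simp add: power_add power2_eq_square abs_mult_self_eq)
      also have "\<dots> \<le> 1 * t\<^sup>2" using tk[of k] by (intro mult_right_mono) auto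
      finally show "\<bar>t\<bar> ^ (k+2) \<le> t\<^sup>2" by simp
    qed (use N0 c0 in auto)
    finally show "norm (u (k+2)) \<le> t\<^sup>2 * (N * (inverse (fact (k+2)) * c ^ (k+2)))" .
  next
    show "summable (\<lambda>k. t\<^sup>2 * (N * (inverse (fact (k+2)) * c ^ (k+2))))"
      by (rule summable_mult[OF su2])
  qed
  also have "\<dots> = t\<^sup>2 * (\<Sum>k. N * (inverse (fact (k+2)) * c ^ (k+2)))"
    by (rule suminf_mult[OF su2])
  finally show ?thesis using eq by simp
qed

lemma mexp_zero: "mexp (0 :: 'n::finite cmat) = mat 1"
  using mexp_bound[of 0 "0::'n cmat"] by simp

lemma mexp_vd: "((\<lambda>t. mexp (t *\<^sub>R (X :: 'n::finite cmat))) has_vector_derivative X) (at 0)"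
proof -
  define C where "C = (\<Sum>k. norm (mat 1 :: 'n cmat) * (inverse (fact (k+2)) * (real (CARD('n))^3 * norm X) ^ (k+2)))"
  have b: "norm (mexp (t *\<^sub>R X) - mat 1 - t *\<^sub>R X) \<le> t\<^sup>2 * C" if "\<bar>t\<bar> \<le> 1" for t
    using mexp_bound[OF that, of X] unfolding C_def by simp
  have "((\<lambda>h. norm (mexp ((0 + h) *\<^sub>R X) - mexp (0 *\<^sub>R X) - h *\<^sub>R X) / norm h) \<longlongrightarrow> 0) (at 0)"
  proof (rule Lim_null_comparison)
    show "\<forall>\<^sub>F h in at 0. norm (norm (mexp ((0 + h) *\<^sub>R X) - mexp (0 *\<^sub>R X) - h *\<^sub>R X) / norm h) \<le> \<bar>h\<bar> * C"
    proof -
      have "\<forall>\<^sub>F h in at (0::real). \<bar>h\<bar> < 1"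
        unfolding eventually_at by (intro exI[of _ 1]) (auto simp: dist_real_def)
      then show ?thesis
      proof (rule eventually_mono)
        fix h :: real assume h: "\<bar>h\<bar> < 1"
        show "norm (norm (mexp ((0 + h) *\<^sub>R X) - mexp (0 *\<^sub>R X) - h *\<^sub>R X) / norm h) \<le> \<bar>h\<bar> * C"
        proof (cases "h = 0")
          case True then show ?thesis by simp
        next
          case False
          have "norm (norm (mexp ((0 + h) *\<^sub>R X) - mexp (0 *\<^sub>R X) - h *\<^sub>R X) / norm h)
              = norm (mexp (h *\<^sub>R X) - mat 1 - h *\<^sub>R X) / \<bar>h\<bar>" by (simp add: mexp_zero)
          also have "\<dots> \<le> h\<^sup>2 * C / \<bar>h\<bar>" using b[of h] h False by (intro divide_right_mono) auto
          also have "\<dots> = \<bar>h\<bar> * C" using False by (simp add: power2_eq_square field_simps abs_mult_self_eq)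
          finally show ?thesis .
        qed
      qed
    qed
    show "((\<lambda>h. \<bar>h\<bar> * C) \<longlongrightarrow> 0) (at (0::real))"
      by (intro tendsto_mult_left_zero tendsto_rabs_zero tendsto_ident_at)
  qed
  then show ?thesis
    unfolding has_vector_derivative_def has_derivative_at
    by (simp add: bounded_linear_scaleR_left)
qed

lemma curve_left_vd: fixes X g J :: "'n::finite cmat" shows "((\<lambda>t. (mexp (t *\<^sub>R X) ** g, J)) has_vector_derivative (X ** g, 0 :: 'n::finite cmat)) (at 0)"
proof -
  have "((\<lambda>t. mexp (t *\<^sub>R X) ** g) has_vector_derivative X ** g) (at 0)"
    using bounded_linear.has_vector_derivative[OF bounded_bilinear.bounded_linear_left[OF bb_mm] mexp_vd] .
  then show ?thesis unfolding has_vector_derivative_def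
    by (auto intro!: derivative_eq_intros)
qed

lemma curve_right_vd: fixes X g J :: "'n::finite cmat" shows "((\<lambda>t. (g ** mexp (t *\<^sub>R X), J)) has_vector_derivative (g ** X, 0 :: 'n::finite cmat)) (at 0)"
proof -
  have "((\<lambda>t. g ** mexp (t *\<^sub>R X)) has_vector_derivative g ** X) (at 0)"
    using bounded_linear.has_vector_derivative[OF bounded_bilinear.bounded_linear_right[OF bb_mm] mexp_vd] .
  then show ?thesis unfolding has_vector_derivative_def
    by (auto intro!: derivative_eq_intros)
qed

lemma curve_J_vd: fixes X g J :: "'n::finite cmat" shows "((\<lambda>t. (g, J + t *\<^sub>R X)) has_vector_derivative (0 :: 'n::finite cmat, X)) (at 0)"
  unfolding has_vector_derivative_def by (auto intro!: derivative_eq_intros)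




section \<open>The pairing and representation\<close>

definition star :: "'n::finite cmat \<Rightarrow> 'n cmat" where
  "star Y = (\<chi> i j. cnj (Y $ j $ i))"

lemma ip_star: "ip Y X = inner (star Y) X"
proof -
  have "ip Y X = (\<Sum>i\<in>UNIV. \<Sum>k\<in>UNIV. Re (Y $ i $ k * X $ k $ i))"
    by (simp add: ip_def trace_def matrix_matrix_mult_def Re_sum)
  also have "\<dots> = (\<Sum>k\<in>UNIV. \<Sum>i\<in>UNIV. Re (Y $ i $ k * X $ k $ i))" by (rule sum.swap)
  also have "\<dots> = inner (star Y) X"
    by (simp add: inner_vec_def star_def inner_complex_def)
  finally show ?thesis .
qed

lemma star_star[simp]: "star (star Y) = Y"
  by (simp add: star_def vec_eq_iff)

lemma star_add: "star (X + Y) = star X + star Y"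
  by (simp add: star_def vec_eq_iff)

lemma star_scaleR: "star (r *\<^sub>R X) = r *\<^sub>R star X"
  by (simp add: star_def vec_eq_iff)

lemma bl_star: "bounded_linear (star :: 'n::finite cmat \<Rightarrow> _)"
proof -
  have "linear (star :: 'n::finite cmat \<Rightarrow> _)"
    by (rule linearI) (simp_all add: star_add star_scaleR)
  then show ?thesis by (simp add: linear_conv_bounded_linear)
qed

lemma ip_fun: "ip = (\<lambda>Y. inner (star Y))"
  by (intro ext) (simp add: ip_star)

lemma bb_ip: "bounded_bilinear (ip :: 'n::finite cmat \<Rightarrow> _)"
  unfolding ip_fun by (rule bounded_bilinear.comp1[OF bounded_bilinear_inner bl_star])

lemma ip_add_left: "ip (X + Y) Z = ip X Z + ip Y Z"
  by (simp add: ip_star star_add inner_add_left)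
lemma ip_add_right: "ip Z (X + Y) = ip Z X + ip Z Y"
  by (simp add: ip_star inner_add_right)
lemma ip_diff_left: "ip (X - Y) Z = ip X Z - ip Y Z"
  using ip_add_left[of "X - Y" Y Z] by simp
lemma ip_diff_right: "ip Z (X - Y) = ip Z X - ip Z Y"
  using ip_add_right[of Z "X - Y" Y] by simp
lemma ip_scaleR_left: "ip (r *\<^sub>R X) Z = r * ip X Z"
  by (simp add: ip_star star_scaleR)
lemma ip_scaleR_right: "ip Z (r *\<^sub>R X) = r * ip Z X"
  by (simp add: ip_star)

definition rep :: "('n::finite cmat \<Rightarrow> real) \<Rightarrow> 'n cmat" where
  "rep L = star (\<Sum>b\<in>Basis. L b *\<^sub>R b)"

lemma ip_rep: assumes "linear L" shows "ip (rep L) X = L X"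
proof -
  have "ip (rep L) X = (\<Sum>b\<in>Basis. L b * inner b X)"
    by (simp add: rep_def ip_star inner_sum_left)
  also have "\<dots> = (\<Sum>b\<in>Basis. inner X b * L b)" by (simp add: inner_commute mult.commute)
  also have "\<dots> = L (\<Sum>b\<in>Basis. inner X b *\<^sub>R b)"
    using assms by (simp add: linear_sum linear_scale)
  also have "\<dots> = L X" by (simp add: euclidean_representation)
  finally show ?thesis .
qed

lemma ip_inj: assumes "\<And>X. ip Y X = ip Z X" shows "Y = Z"
proof -
  have "inner (star Y - star Z) (star Y - star Z) = 0"
    using assms by (simp add: inner_diff_left ip_star)
  then have "star Y = star Z" by simp
  then have "star (star Y) = star (star Z)" by simp
  then show ?thesis by simp
qed

lemma the_ip: assumes "linear L" shows "(THE Y. \<forall>X. ip Y X = L X) = rep L"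
  by (rule the_equality) (auto intro: ip_inj simp: ip_rep[OF assms])

lemma rep_vd:
  assumes "\<And>b. ((\<lambda>s. L s b) has_real_derivative L' b) (at 0)"
  shows "((\<lambda>s. rep (L s)) has_vector_derivative rep L') (at 0)"
proof -
  have "((\<lambda>s. (\<Sum>b\<in>Basis. L s b *\<^sub>R b)) has_vector_derivative (\<Sum>b\<in>Basis. L' b *\<^sub>R b)) (at 0)"
  proof (rule has_vector_derivative_sum)
    fix b :: "'a cmat" assume "b \<in> Basis"
    have "((\<lambda>s. L s b) has_vector_derivative L' b) (at 0)"
      using assms[of b] by (simp add: has_real_derivative_iff_has_vector_derivative)
    from bounded_linear.has_vector_derivative[OF bounded_linear_scaleR_left this]
    show "((\<lambda>s. L s b *\<^sub>R b) has_vector_derivative L' b *\<^sub>R b) (at 0)" .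
  qed
  from bounded_linear.has_vector_derivative[OF bl_star this] show ?thesis
    unfolding rep_def .
qed

lemma continuous_det: "continuous_on UNIV (det :: 'n::finite cmat \<Rightarrow> complex)"
  unfolding det_def by (intro continuous_intros)

lemma open_MM: "open (MM :: 'n::finite pt set)"
proof -
  have "MM = {p :: 'n pt. det (fst p) \<noteq> 0}"
    by (auto simp: MM_def invertible_det_nz)
  moreover have "open {p :: 'n pt. det (fst p) \<noteq> 0}"
    by (intro open_Collect_neq continuous_intros continuous_on_compose2[OF continuous_det]) auto
  ultimately show ?thesis by simp
qed


section \<open>Gradients of smooth functions\<close>

definition ee :: "'n::finite pt" where "ee = (0, mat 1)"
definition qq :: "'n::finite pt \<Rightarrow> real \<Rightarrow> 'n pt" where "qq p s = (fst p, snd p + s *\<^sub>R mat 1)"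

lemma qq_eq: "qq p s = p + s *\<^sub>R ee" by (cases p) (simp add: qq_def ee_def)
lemma qq_0[simp]: "qq p 0 = p" by (simp add: qq_def)
lemma fst_qq[simp]: "fst (qq p s) = fst p" by (simp add: qq_def)
lemma snd_qq[simp]: "snd (qq p s) = snd p + s *\<^sub>R mat 1" by (simp add: qq_def)
lemma qq_MM: "p \<in> MM \<Longrightarrow> qq p s \<in> MM" by (cases p) (simp add: qq_def MM_def)

lemma curve_deriv:
  fixes F :: "'n::finite pt \<Rightarrow> real"
  assumes sw: "sw MM F d" and p: "p \<in> MM" and g: "(\<gamma> has_vector_derivative v) (at 0)" and g0: "\<gamma> 0 = p"
  shows "deriv (\<lambda>t. F (\<gamma> t)) 0 = d [v] p"
proof -
  have "(d [] has_derivative (\<lambda>w. d [w] p)) (at p)" using sw_der[OF sw p] .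
  then have F: "(F has_derivative (\<lambda>w. d [w] p)) (at p)"
    by (rule has_derivative_transform_within_open[OF _ open_MM p]) (use sw in \<open>simp add: sw_def\<close>)
  have g': "(\<gamma> has_derivative (\<lambda>h. h *\<^sub>R v)) (at 0)" using g by (simp add: has_vector_derivative_def)
  have "((\<lambda>t. F (\<gamma> t)) has_derivative (\<lambda>h. d [h *\<^sub>R v] p)) (at 0)"
    using has_derivative_compose[OF g', of F] F g0 by simp
  then have "((\<lambda>t. F (\<gamma> t)) has_real_derivative d [v] p) (at 0)"
    by (rule has_derivative_imp_has_field_derivative)
       (simp add: linear_scale[OF bounded_linear.linear[OF sw_lin[OF sw p]]])
  then show ?thesis by (rule DERIV_imp_deriv)
qed

lemma bl_W1: "bounded_linear (\<lambda>X::'n::finite cmat. (X ** (g::'n cmat), 0::'n cmat))"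
  by (intro bounded_linear_Pair bounded_bilinear.bounded_linear_left[OF bb_mm] bounded_linear_zero)
lemma bl_W1': "bounded_linear (\<lambda>X::'n::finite cmat. ((g::'n cmat) ** X, 0::'n cmat))"
  by (intro bounded_linear_Pair bounded_bilinear.bounded_linear_right[OF bb_mm] bounded_linear_zero)
lemma bl_W2: "bounded_linear (\<lambda>X. (0::'n::finite cmat, X::'n cmat))"
  by (intro bounded_linear_Pair bounded_linear_ident bounded_linear_zero)

lemma lin_dW: assumes "sw MM F d" "p \<in> MM" "bounded_linear W" shows "linear (\<lambda>X. d (W X # vs) p)"
proof -
  have "bounded_linear (\<lambda>v. d (v # vs) p)" by (rule sw_lin[OF assms(1,2)])
  from bounded_linear_compose[OF this assms(3)] show ?thesis by (rule bounded_linear.linear)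
qed

lemma nabla1_eq:
  fixes F :: "'n::finite pt \<Rightarrow> real"
  assumes sw: "sw MM F d" and p: "p \<in> MM"
  shows "nabla1 F p = rep (\<lambda>X. d [(X ** fst p, 0)] p)"
proof -
  have "deriv (\<lambda>t. F (mexp (t *\<^sub>R X) ** fst p, snd p)) 0 = d [(X ** fst p, 0)] p" for X
    by (rule curve_deriv[OF sw p curve_left_vd]) (simp add: mexp_zero)
  then show ?thesis unfolding nabla1_def using the_ip[OF lin_dW[OF sw p bl_W1, where vs="[]"]] by simp
qed

lemma nabla1'_eq:
  fixes F :: "'n::finite pt \<Rightarrow> real"
  assumes sw: "sw MM F d" and p: "p \<in> MM"
  shows "nabla1' F p = rep (\<lambda>X. d [(fst p ** X, 0)] p)"
proof -
  have "deriv (\<lambda>t. F (fst p ** mexp (t *\<^sub>R X), snd p)) 0 = d [(fst p ** X, 0)] p" for X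
    by (rule curve_deriv[OF sw p curve_right_vd]) (simp add: mexp_zero)
  then show ?thesis unfolding nabla1'_def using the_ip[OF lin_dW[OF sw p bl_W1', where vs="[]"]] by simp
qed

lemma d2_eq:
  fixes F :: "'n::finite pt \<Rightarrow> real"
  assumes sw: "sw MM F d" and p: "p \<in> MM"
  shows "d2 F p = rep (\<lambda>X. d [(0, X)] p)"
proof -
  have "deriv (\<lambda>t. F (fst p, snd p + t *\<^sub>R X)) 0 = d [(0, X)] p" for X
    by (rule curve_deriv[OF sw p curve_J_vd]) simp
  then show ?thesis unfolding d2_def using the_ip[OF lin_dW[OF sw p bl_W2, where vs="[]"]] by simp
qed

lemma DD_eq:
  fixes F :: "'n::finite pt \<Rightarrow> real"
  assumes sw: "sw MM F d" and p: "p \<in> MM"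
  shows "DD F p = d [ee] p"
  unfolding DD_def ee_def by (rule curve_deriv[OF sw p curve_J_vd]) simp

lemma sw_DD:
  fixes F :: "'n::finite pt \<Rightarrow> real"
  assumes sw: "sw MM F d"
  shows "sw MM (DD F) (\<lambda>vs. d (vs @ [ee]))"
  unfolding sw_def
proof (intro conjI ballI allI)
  fix x :: "'n pt" assume "x \<in> MM"
  then show "d ([] @ [ee]) x = DD F x" using DD_eq[OF sw] by simp
next
  fix vs and x :: "'n pt" assume "x \<in> MM"
  then show "(d (vs @ [ee]) has_derivative (\<lambda>v. d ((v # vs) @ [ee]) x)) (at x)"
    using sw_der[OF sw, of x "vs @ [ee]"] by simp
qed

lemma smooth_DD: "smooth_on MM (F :: 'n::finite pt \<Rightarrow> real) \<Longrightarrow> smooth_on MM (DD F)"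
  using sw_DD unfolding smooth_sw by blast

lemma rep_line_vd:
  fixes F :: "'n::finite pt \<Rightarrow> real"
  assumes sw: "sw MM F d" and p: "p \<in> MM"
  shows "((\<lambda>s. rep (\<lambda>X. d [W X] (qq p s))) has_vector_derivative rep (\<lambda>X. d [W X, ee] p)) (at 0)"
proof (rule rep_vd)
  fix b
  have "((\<lambda>s. d [W b] (p + s *\<^sub>R ee)) has_real_derivative d [ee, W b] (p + 0 *\<^sub>R ee)) (at 0)"
    by (rule sw_line[OF sw]) (simp add: p)
  then show "((\<lambda>s. d [W b] (qq p s)) has_real_derivative d [W b, ee] p) (at 0)"
    using schwarz[OF sw open_MM p, of ee "W b"] by (simp add: qq_eq)
qed

lemma N1_vd:
  fixes F :: "'n::finite pt \<Rightarrow> real"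
  assumes sw: "sw MM F d" and p: "p \<in> MM"
  shows "((\<lambda>s. nabla1 F (qq p s)) has_vector_derivative nabla1 (DD F) p) (at 0)"
proof -
  have e: "nabla1 F (qq p s) = rep (\<lambda>X. d [(X ** fst p, 0)] (qq p s))" for s
    using nabla1_eq[OF sw qq_MM[OF p]] by simp
  have "nabla1 (DD F) p = rep (\<lambda>X. d [(X ** fst p, 0), ee] p)"
    using nabla1_eq[OF sw_DD[OF sw] p] by simp
  then show ?thesis unfolding e using rep_line_vd[OF sw p, of "\<lambda>X. (X ** fst p, 0)"] by simp
qed

lemma N1'_vd:
  fixes F :: "'n::finite pt \<Rightarrow> real"
  assumes sw: "sw MM F d" and p: "p \<in> MM"
  shows "((\<lambda>s. nabla1' F (qq p s)) has_vector_derivative nabla1' (DD F) p) (at 0)"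
proof -
  have e: "nabla1' F (qq p s) = rep (\<lambda>X. d [(fst p ** X, 0)] (qq p s))" for s
    using nabla1'_eq[OF sw qq_MM[OF p]] by simp
  have "nabla1' (DD F) p = rep (\<lambda>X. d [(fst p ** X, 0), ee] p)"
    using nabla1'_eq[OF sw_DD[OF sw] p] by simp
  then show ?thesis unfolding e using rep_line_vd[OF sw p, of "\<lambda>X. (fst p ** X, 0)"] by simp
qed

lemma D2_vd:
  fixes F :: "'n::finite pt \<Rightarrow> real"
  assumes sw: "sw MM F d" and p: "p \<in> MM"
  shows "((\<lambda>s. d2 F (qq p s)) has_vector_derivative d2 (DD F) p) (at 0)"
proof -
  have e: "d2 F (qq p s) = rep (\<lambda>X. d [(0, X)] (qq p s))" for s
    using d2_eq[OF sw qq_MM[OF p]] by simp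
  have "d2 (DD F) p = rep (\<lambda>X. d [(0, X), ee] p)"
    using d2_eq[OF sw_DD[OF sw] p] by simp
  then show ?thesis unfolding e using rep_line_vd[OF sw p, of "\<lambda>X. (0, X)"] by simp
qed

lemma J_vd: "((\<lambda>s. snd (qq p s)) has_vector_derivative (mat 1 :: 'n::finite cmat)) (at 0)"
proof -
  have "((\<lambda>s. snd p + s *\<^sub>R (mat 1 :: 'n cmat)) has_vector_derivative mat 1) (at 0)"
    unfolding has_vector_derivative_def by (auto intro!: derivative_eq_intros)
  then show ?thesis by simp
qed

lemma N2_vd:
  fixes F :: "'n::finite pt \<Rightarrow> real"
  assumes sw: "sw MM F d" and p: "p \<in> MM"
  shows "((\<lambda>s. nabla2 F (qq p s)) has_vector_derivative (d2 F p + nabla2 (DD F) p)) (at 0)"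
proof -
  have "((\<lambda>s. snd (qq p s) ** d2 F (qq p s)) has_vector_derivative
      (snd (qq p 0) ** d2 (DD F) p + mat 1 ** d2 F (qq p 0))) (at 0)"
    by (rule bounded_bilinear.has_vector_derivative[OF bb_mm J_vd D2_vd[OF sw p]])
  then show ?thesis unfolding nabla2_def by (simp add: add.commute)
qed

lemma N2'_vd:
  fixes F :: "'n::finite pt \<Rightarrow> real"
  assumes sw: "sw MM F d" and p: "p \<in> MM"
  shows "((\<lambda>s. nabla2' F (qq p s)) has_vector_derivative (d2 F p + nabla2' (DD F) p)) (at 0)"
proof -
  have "((\<lambda>s. d2 F (qq p s) ** snd (qq p s)) has_vector_derivative
      (d2 F (qq p 0) ** mat 1 + d2 (DD F) p ** snd (qq p 0))) (at 0)"
    by (rule bounded_bilinear.has_vector_derivative[OF bb_mm D2_vd[OF sw p] J_vd])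
  then show ?thesis unfolding nabla2'_def by simp
qed



section \<open>The r-matrix and the main identity\<close>

lemma upper_add: "upper (X + Y) = upper X + upper Y" by (simp add: upper_def vec_eq_iff)
lemma lower_add: "lower (X + Y) = lower X + lower Y" by (simp add: lower_def vec_eq_iff)
lemma upper_scaleR: "upper (r *\<^sub>R X) = r *\<^sub>R upper X" by (simp add: upper_def vec_eq_iff)
lemma lower_scaleR: "lower (r *\<^sub>R X) = r *\<^sub>R lower X" by (simp add: lower_def vec_eq_iff)

lemma rr_add: "rr (X + Y) = rr X + rr Y"
  by (simp add: rr_def upper_add lower_add algebra_simps)
lemma rr_scaleR: "rr (r *\<^sub>R X) = r *\<^sub>R rr X"
  by (simp add: rr_def upper_scaleR lower_scaleR algebra_simps)
lemma rr_diff: "rr (X - Y) = rr X - rr Y"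
  using rr_add[of "X - Y" Y] by simp

lemma bl_rr: "bounded_linear (rr :: 'n::{finite,linorder} cmat \<Rightarrow> _)"
proof -
  have "linear (rr :: 'n cmat \<Rightarrow> _)" by (rule linearI) (simp_all add: rr_add rr_scaleR)
  then show ?thesis by (simp add: linear_conv_bounded_linear)
qed

lemma bl_rplus: "bounded_linear (rplus :: 'n::{finite,linorder} cmat \<Rightarrow> _)"
  unfolding rplus_def[abs_def]
  by (intro bounded_linear_add bl_rr bounded_linear_scaleR_right bounded_linear_ident)
lemma bl_rminus: "bounded_linear (rminus :: 'n::{finite,linorder} cmat \<Rightarrow> _)"
  unfolding rminus_def[abs_def]
  by (intro bounded_linear_sub bl_rr bounded_linear_scaleR_right bounded_linear_ident)

lemma br2_vd:
  fixes A1 A2 A3 A4 B1 B2 B3 B4 :: "real \<Rightarrow> 'n::{finite,linorder} cmat"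
  assumes a1: "(A1 has_vector_derivative A1') (at 0)" and a2: "(A2 has_vector_derivative A2') (at 0)"
    and a3: "(A3 has_vector_derivative A3') (at 0)" and a4: "(A4 has_vector_derivative A4') (at 0)"
    and b1: "(B1 has_vector_derivative B1') (at 0)" and b2: "(B2 has_vector_derivative B2') (at 0)"
    and b3: "(B3 has_vector_derivative B3') (at 0)" and b4: "(B4 has_vector_derivative B4') (at 0)"
  shows "((\<lambda>s. ip (rr (A1 s)) (B1 s) - ip (rr (A2 s)) (B2 s)
      + ip (A3 s - A4 s) (rplus (B4 s) - rminus (B3 s))
      + ip (A1 s) (rplus (B4 s) - rminus (B3 s))
      - ip (B1 s) (rplus (A4 s) - rminus (A3 s))) has_vector_derivative
     ((ip (rr (A1 0)) B1' + ip (rr A1') (B1 0))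
      - (ip (rr (A2 0)) B2' + ip (rr A2') (B2 0))
      + (ip (A3 0 - A4 0) (rplus B4' - rminus B3') + ip (A3' - A4') (rplus (B4 0) - rminus (B3 0)))
      + (ip (A1 0) (rplus B4' - rminus B3') + ip A1' (rplus (B4 0) - rminus (B3 0)))
      - (ip (B1 0) (rplus A4' - rminus A3') + ip B1' (rplus (A4 0) - rminus (A3 0))))) (at 0)"
  by (intro has_vector_derivative_add has_vector_derivative_diff
      bounded_bilinear.has_vector_derivative[OF bb_ip]
      bounded_linear.has_vector_derivative[OF bl_rr]
      bounded_linear.has_vector_derivative[OF bl_rplus]
      bounded_linear.has_vector_derivative[OF bl_rminus] assms)

lemma ip_mm_assoc: "ip (A ** B) C = ip A (B ** C)"
  by (simp add: ip_def matrix_mul_assoc)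
lemma ip_mm_rot: "ip (A ** B) C = ip B (C ** A)"
proof -
  have "trace ((A ** B) ** C) = trace (B ** (C ** A))"
    by (metis matrix_mul_assoc trace_mul_sym)
  then show ?thesis by (simp add: ip_def)
qed

lemma alg:
  fixes J d e d1 e1 A A' A1 A1' B B' B1 B1' :: "'n::{finite,linorder} cmat"
  shows "ip A e - ip B d + ip J (d ** e - e ** d) =
     ((ip (rr A) B1 + ip (rr A1) B)
      - (ip (rr A') B1' + ip (rr A1') B')
      + (ip (J ** d - d ** J) (rplus (e + e1 ** J) - rminus (e + J ** e1))
         + ip ((d + J ** d1) - (d + d1 ** J)) (rplus (e ** J) - rminus (J ** e)))
      + (ip A (rplus (e + e1 ** J) - rminus (e + J ** e1))
         + ip A1 (rplus (e ** J) - rminus (J ** e)))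
      - (ip B (rplus (d + d1 ** J) - rminus (d + J ** d1))
         + ip B1 (rplus (d ** J) - rminus (J ** d))))
   - (ip (rr A1) B - ip (rr A1') B' + ip (J ** d1 - d1 ** J) (rplus (e ** J) - rminus (J ** e))
      + ip A1 (rplus (e ** J) - rminus (J ** e)) - ip B (rplus (d1 ** J) - rminus (J ** d1)))
   - (ip (rr A) B1 - ip (rr A') B1' + ip (J ** d - d ** J) (rplus (e1 ** J) - rminus (J ** e1))
      + ip A (rplus (e1 ** J) - rminus (J ** e1)) - ip B1 (rplus (d ** J) - rminus (J ** d)))"
  unfolding rplus_def rminus_def
  by (simp only: ip_add_left ip_add_right ip_diff_left ip_diff_right ip_scaleR_left ip_scaleR_right
        rr_add rr_diff rr_scaleR ip_mm_assoc[of J] ip_mm_rot[of d J]) (simp add: algebra_simps)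

lemma main_identity:
  fixes F H :: "'n::{finite,linorder} pt \<Rightarrow> real"
  assumes F: "smooth_on MM F" and H: "smooth_on MM H" and p: "p \<in> MM"
  shows "bracket1 F H p = lieD bracket2 F H p"
proof -
  obtain dF where sF: "sw MM F dF" using F unfolding smooth_sw by blast
  obtain dH where sH: "sw MM H dH" using H unfolding smooth_sw by blast
  have vd: "((\<lambda>s. bracket2 F H (qq p s)) has_vector_derivative
     ((ip (rr (nabla1 F p)) (nabla1 (DD H) p) + ip (rr (nabla1 (DD F) p)) (nabla1 H p))
      - (ip (rr (nabla1' F p)) (nabla1' (DD H) p) + ip (rr (nabla1' (DD F) p)) (nabla1' H p))
      + (ip (nabla2 F p - nabla2' F p) (rplus (d2 H p + nabla2' (DD H) p) - rminus (d2 H p + nabla2 (DD H) p))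
         + ip ((d2 F p + nabla2 (DD F) p) - (d2 F p + nabla2' (DD F) p)) (rplus (nabla2' H p) - rminus (nabla2 H p)))
      + (ip (nabla1 F p) (rplus (d2 H p + nabla2' (DD H) p) - rminus (d2 H p + nabla2 (DD H) p))
         + ip (nabla1 (DD F) p) (rplus (nabla2' H p) - rminus (nabla2 H p)))
      - (ip (nabla1 H p) (rplus (d2 F p + nabla2' (DD F) p) - rminus (d2 F p + nabla2 (DD F) p))
         + ip (nabla1 (DD H) p) (rplus (nabla2' F p) - rminus (nabla2 F p))))) (at 0)"
    unfolding bracket2_def
    using br2_vd[OF N1_vd[OF sF p] N1'_vd[OF sF p] N2_vd[OF sF p] N2'_vd[OF sF p]
                    N1_vd[OF sH p] N1'_vd[OF sH p] N2_vd[OF sH p] N2'_vd[OF sH p]]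
    by simp
  then have dd: "DD (bracket2 F H) p = (ip (rr (nabla1 F p)) (nabla1 (DD H) p) + ip (rr (nabla1 (DD F) p)) (nabla1 H p))
      - (ip (rr (nabla1' F p)) (nabla1' (DD H) p) + ip (rr (nabla1' (DD F) p)) (nabla1' H p))
      + (ip (nabla2 F p - nabla2' F p) (rplus (d2 H p + nabla2' (DD H) p) - rminus (d2 H p + nabla2 (DD H) p))
         + ip ((d2 F p + nabla2 (DD F) p) - (d2 F p + nabla2' (DD F) p)) (rplus (nabla2' H p) - rminus (nabla2 H p)))
      + (ip (nabla1 F p) (rplus (d2 H p + nabla2' (DD H) p) - rminus (d2 H p + nabla2 (DD H) p))
         + ip (nabla1 (DD F) p) (rplus (nabla2' H p) - rminus (nabla2 H p)))
      - (ip (nabla1 H p) (rplus (d2 F p + nabla2' (DD F) p) - rminus (d2 F p + nabla2 (DD F) p))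
         + ip (nabla1 (DD H) p) (rplus (nabla2' F p) - rminus (nabla2 F p)))"
    unfolding DD_def qq_def[symmetric]
    by (intro DERIV_imp_deriv) (simp add: has_real_derivative_iff_has_vector_derivative)
  show ?thesis
    unfolding lieD_def dd bracket1_def bracket2_def[of "DD F" H p] bracket2_def[of F "DD H" p]
      nabla2_def nabla2'_def
    by (rule alg)
qed



section \<open>Abstract bracket manipulations\<close>

lemma smooth_lin:
  assumes "smooth_on S F" "smooth_on S H"
  shows "smooth_on S (\<lambda>q. a * F q + b * H q)"
proof -
  obtain dF where dF: "sw S F dF" using assms(1) unfolding smooth_sw by blast
  obtain dH where dH: "sw S H dH" using assms(2) unfolding smooth_sw by blast
  have "sw S (\<lambda>q. a * F q + b * H q) (\<lambda>vs x. a * dF vs x + b * dH vs x)"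
    unfolding sw_def
  proof (intro conjI ballI allI)
    fix x assume "x \<in> S" then show "a * dF [] x + b * dH [] x = a * F x + b * H x"
      using dF dH by (simp add: sw_def)
  next
    fix vs x assume x: "x \<in> S"
    show "((\<lambda>x. a * dF vs x + b * dH vs x) has_derivative (\<lambda>v. a * dF (v # vs) x + b * dH (v # vs) x)) (at x)"
      using sw_der[OF dF x, of vs] sw_der[OF dH x, of vs] by (auto intro!: derivative_eq_intros)
  qed
  then show ?thesis unfolding smooth_sw by blast
qed

lemma smooth_ind:
  assumes S: "open S"
  shows "smooth_on S (\<lambda>q. if q \<in> S then 0 else (1::real))"
proof -
  define d :: "'a list \<Rightarrow> 'a \<Rightarrow> real" where "d vs = (if vs = [] then (\<lambda>q. if q \<in> S then 0 else 1) else (\<lambda>q. 0))" for vs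
  have "sw S (\<lambda>q. if q \<in> S then 0 else (1::real)) d"
    unfolding sw_def
  proof (intro conjI ballI allI)
    fix x assume "x \<in> S" then show "d [] x = (if x \<in> S then 0 else 1)" by (simp add: d_def)
  next
    fix vs and x :: 'a assume x: "x \<in> S"
    show "(d vs has_derivative (\<lambda>v. d (v # vs) x)) (at x)"
    proof (cases "vs = []")
      case True
      have "((\<lambda>q. 0::real) has_derivative (\<lambda>v. 0)) (at x)" by simp
      then have "((\<lambda>q. if q \<in> S then 0 else (1::real)) has_derivative (\<lambda>v. 0)) (at x)"
        by (rule has_derivative_transform_within_open[OF _ S x]) simp
      then show ?thesis using True by (simp add: d_def)
    next
      case False then show ?thesis by (simp add: d_def)
    qed
  qed
  then show ?thesis unfolding smooth_sw by blast
qed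

lemma pb_sm: "poisson_bracket P \<Longrightarrow> smooth_on MM F \<Longrightarrow> smooth_on MM H \<Longrightarrow> smooth_on MM (P F H)"
  unfolding poisson_bracket_def by blast

lemma pb_lin: "poisson_bracket P \<Longrightarrow> smooth_on MM F \<Longrightarrow> smooth_on MM H \<Longrightarrow> smooth_on MM K \<Longrightarrow> p \<in> MM \<Longrightarrow>
   P (\<lambda>q. a * F q + b * H q) K p = a * P F K p + b * P H K p"
  unfolding poisson_bracket_def by blast

lemma pb_anti: "poisson_bracket P \<Longrightarrow> smooth_on MM F \<Longrightarrow> smooth_on MM H \<Longrightarrow> p \<in> MM \<Longrightarrow>
   P F H p = - P H F p"
  unfolding poisson_bracket_def by blast

lemma pb_leib: "poisson_bracket P \<Longrightarrow> smooth_on MM F \<Longrightarrow> smooth_on MM H \<Longrightarrow> smooth_on MM K \<Longrightarrow> p \<in> MM \<Longrightarrow>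
   P F (\<lambda>q. H q * K q) p = P F H p * K p + H p * P F K p"
  unfolding poisson_bracket_def by blast

lemma pb_jac: "poisson_bracket P \<Longrightarrow> smooth_on MM F \<Longrightarrow> smooth_on MM H \<Longrightarrow> smooth_on MM K \<Longrightarrow> p \<in> MM \<Longrightarrow>
   P F (P H K) p + P H (P K F) p + P K (P F H) p = 0"
  unfolding poisson_bracket_def by blast

lemma pb_lin2:
  assumes P: "poisson_bracket P" and F: "smooth_on MM F" and A: "smooth_on MM A" and B: "smooth_on MM B" and p: "p \<in> MM"
  shows "P F (\<lambda>q. a * A q + b * B q) p = a * P F A p + b * P F B p"
proof -
  have "P F (\<lambda>q. a * A q + b * B q) p = - P (\<lambda>q. a * A q + b * B q) F p"
    by (rule pb_anti[OF P F smooth_lin[OF A B] p])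
  also have "\<dots> = - (a * P A F p + b * P B F p)" by (simp add: pb_lin[OF P A B F p])
  also have "\<dots> = a * P F A p + b * P F B p"
    using pb_anti[OF P A F p] pb_anti[OF P B F p] by simp
  finally show ?thesis .
qed

lemma pb_local:
  assumes P: "poisson_bracket P" and F: "smooth_on MM F" and A: "smooth_on MM A" and B: "smooth_on MM B"
    and eq: "\<And>q. q \<in> MM \<Longrightarrow> A q = B q" and p: "p \<in> MM"
  shows "P F A p = P F B p"
proof -
  define Z where "Z = (\<lambda>q. 1 * A q + (-1) * B q)"
  define K :: "'a pt \<Rightarrow> real" where "K = (\<lambda>q. if q \<in> MM then 0 else 1)"
  have Zs: "smooth_on MM Z" unfolding Z_def by (rule smooth_lin[OF A B])
  have Ks: "smooth_on MM K" unfolding K_def by (rule smooth_ind[OF open_MM])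
  have ZK: "(\<lambda>q. Z q * K q) = Z" by (auto simp: fun_eq_iff Z_def K_def eq)
  have L: "P F (\<lambda>q. Z q * K q) p = P F Z p * K p + Z p * P F K p" by (rule pb_leib[OF P F Zs Ks p])
  have L2: "P F (\<lambda>q. Z q * K q) p = P F Z p" by (simp only: ZK)
  have Kp: "K p = 0" and Zp: "Z p = 0" using p by (simp_all add: K_def Z_def eq)
  have Z0: "P F Z p = 0" using L L2 Kp Zp by simp
  have AB: "A = (\<lambda>q. 1 * B q + 1 * Z q)" by (simp add: fun_eq_iff Z_def)
  have "P F A p = 1 * P F B p + 1 * P F Z p"
    by (subst AB) (rule pb_lin2[OF P F B Zs p])
  then show ?thesis using Z0 by simp
qed

lemma curve_DERIV:
  fixes F :: "'n::finite pt \<Rightarrow> real"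
  assumes sw: "sw MM F d" and p: "p \<in> MM" and g: "(\<gamma> has_vector_derivative v) (at 0)" and g0: "\<gamma> 0 = p"
  shows "((\<lambda>t. F (\<gamma> t)) has_real_derivative d [v] p) (at 0)"
proof -
  have "(d [] has_derivative (\<lambda>w. d [w] p)) (at p)" using sw_der[OF sw p] .
  then have F: "(F has_derivative (\<lambda>w. d [w] p)) (at p)"
    by (rule has_derivative_transform_within_open[OF _ open_MM p]) (use sw in \<open>simp add: sw_def\<close>)
  have g': "(\<gamma> has_derivative (\<lambda>h. h *\<^sub>R v)) (at 0)" using g by (simp add: has_vector_derivative_def)
  have "((\<lambda>t. F (\<gamma> t)) has_derivative (\<lambda>h. d [h *\<^sub>R v] p)) (at 0)"
    using has_derivative_compose[OF g', of F] F g0 by simp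
  then show ?thesis
    by (rule has_derivative_imp_has_field_derivative)
       (simp add: linear_scale[OF bounded_linear.linear[OF sw_lin[OF sw p]]])
qed

lemma DD_DERIV:
  fixes F :: "'n::finite pt \<Rightarrow> real"
  assumes F: "smooth_on MM F" and p: "p \<in> MM"
  shows "((\<lambda>t. F (fst p, snd p + t *\<^sub>R mat 1)) has_real_derivative DD F p) (at 0)"
proof -
  obtain d where sw: "sw MM F d" using F unfolding smooth_sw by blast
  have "((\<lambda>t. F (fst p, snd p + t *\<^sub>R mat 1)) has_real_derivative d [ee] p) (at 0)"
    unfolding ee_def by (rule curve_DERIV[OF sw p curve_J_vd]) simp
  then show ?thesis using DD_eq[OF sw p] by simp
qed

lemma DD_sum3_zero:
  fixes f1 f2 f3 :: "'n::finite pt \<Rightarrow> real"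
  assumes "smooth_on MM f1" "smooth_on MM f2" "smooth_on MM f3" and p: "p \<in> MM"
    and z: "\<And>q. q \<in> MM \<Longrightarrow> f1 q + f2 q + f3 q = 0"
  shows "DD f1 p + DD f2 p + DD f3 p = 0"
proof -
  have "((\<lambda>t. f1 (fst p, snd p + t *\<^sub>R mat 1) + f2 (fst p, snd p + t *\<^sub>R mat 1) + f3 (fst p, snd p + t *\<^sub>R mat 1))
     has_real_derivative DD f1 p + DD f2 p + DD f3 p) (at 0)"
    by (intro DERIV_add DD_DERIV assms)
  moreover have "(\<lambda>t. f1 (fst p, snd p + t *\<^sub>R mat 1) + f2 (fst p, snd p + t *\<^sub>R mat 1) + f3 (fst p, snd p + t *\<^sub>R mat 1)) = (\<lambda>t. 0)"
    using z qq_MM[OF p] unfolding qq_def by (auto simp: fun_eq_iff)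
  ultimately have "((\<lambda>t. 0::real) has_real_derivative DD f1 p + DD f2 p + DD f3 p) (at 0)" by simp
  then show ?thesis using DERIV_const DERIV_unique by blast
qed

lemma smooth_lieD:
  assumes P: "poisson_bracket P" and H: "smooth_on MM H" and K: "smooth_on MM K"
  shows "smooth_on MM (lieD P H K)"
proof -
  have eq: "lieD P H K = (\<lambda>q. 1 * (\<lambda>q. 1 * DD (P H K) q + (-1) * P (DD H) K q) q + (-1) * P H (DD K) q)"
    by (simp add: fun_eq_iff lieD_def)
  have "smooth_on MM (\<lambda>q. 1 * (\<lambda>q. 1 * DD (P H K) q + (-1) * P (DD H) K q) q + (-1) * P H (DD K) q)"
    by (intro smooth_lin smooth_DD pb_sm[OF P] H K)
  then show ?thesis by (simp only: eq)
qed

lemma mixed_term: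
  fixes P Q :: "('n::finite pt \<Rightarrow> real) \<Rightarrow> ('n pt \<Rightarrow> real) \<Rightarrow> 'n pt \<Rightarrow> real"
  assumes P: "poisson_bracket P" and Q: "poisson_bracket Q"
    and QL: "\<And>F H p. smooth_on MM F \<Longrightarrow> smooth_on MM H \<Longrightarrow> p \<in> MM \<Longrightarrow> Q F H p = lieD P F H p"
    and F: "smooth_on MM F" and H: "smooth_on MM H" and K: "smooth_on MM K" and p: "p \<in> MM"
  shows "Q F (P H K) p + P F (Q H K) p =
     DD (P F (P H K)) p - P (DD F) (P H K) p - P F (P (DD H) K) p - P F (P H (DD K)) p"
proof -
  have e1: "Q F (P H K) p = DD (P F (P H K)) p - P (DD F) (P H K) p - P F (DD (P H K)) p"
    using QL[OF F pb_sm[OF P H K] p] by (simp add: lieD_def)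
  have e2: "P F (Q H K) p = P F (lieD P H K) p"
    by (rule pb_local[OF P F pb_sm[OF Q H K] smooth_lieD[OF P H K]]) (auto simp: QL[OF H K] p)
  define X where "X = (\<lambda>q. 1 * DD (P H K) q + (-1) * P (DD H) K q)"
  have Xs: "smooth_on MM X" unfolding X_def by (intro smooth_lin smooth_DD pb_sm[OF P] H K)
  have l: "lieD P H K = (\<lambda>q. 1 * X q + (-1) * P H (DD K) q)"
    by (simp add: fun_eq_iff lieD_def X_def)
  have e3: "P F (lieD P H K) p = P F X p - P F (P H (DD K)) p"
    unfolding l using pb_lin2[OF P F Xs pb_sm[OF P H smooth_DD[OF K]] p, of 1 "-1"] by simp
  have e4: "P F X p = P F (DD (P H K)) p - P F (P (DD H) K) p"
    unfolding X_def using pb_lin2[OF P F smooth_DD[OF pb_sm[OF P H K]] pb_sm[OF P smooth_DD[OF H] K] p, of 1 "-1"] by simp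
  show ?thesis using e1 e2 e3 e4 by simp
qed

lemma mixed_jacobi:
  fixes P Q :: "('n::finite pt \<Rightarrow> real) \<Rightarrow> ('n pt \<Rightarrow> real) \<Rightarrow> 'n pt \<Rightarrow> real"
  assumes P: "poisson_bracket P" and Q: "poisson_bracket Q"
    and QL: "\<And>F H p. smooth_on MM F \<Longrightarrow> smooth_on MM H \<Longrightarrow> p \<in> MM \<Longrightarrow> Q F H p = lieD P F H p"
    and F: "smooth_on MM F" and H: "smooth_on MM H" and K: "smooth_on MM K" and p: "p \<in> MM"
  shows "(Q F (P H K) p + P F (Q H K) p) + (Q H (P K F) p + P H (Q K F) p) + (Q K (P F H) p + P K (Q F H) p) = 0"
proof -
  note m1 = mixed_term[OF P Q QL F H K p]
  note m2 = mixed_term[OF P Q QL H K F p]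
  note m3 = mixed_term[OF P Q QL K F H p]
  have d: "DD (P F (P H K)) p + DD (P H (P K F)) p + DD (P K (P F H)) p = 0"
    by (rule DD_sum3_zero[OF pb_sm[OF P F pb_sm[OF P H K]] pb_sm[OF P H pb_sm[OF P K F]] pb_sm[OF P K pb_sm[OF P F H]] p])
       (rule pb_jac[OF P F H K])
  have j1: "P (DD F) (P H K) p + P H (P K (DD F)) p + P K (P (DD F) H) p = 0"
    by (rule pb_jac[OF P smooth_DD[OF F] H K p])
  have j2: "P F (P (DD H) K) p + P (DD H) (P K F) p + P K (P F (DD H)) p = 0"
    by (rule pb_jac[OF P F smooth_DD[OF H] K p])
  have j3: "P F (P H (DD K)) p + P H (P (DD K) F) p + P (DD K) (P F H) p = 0"
    by (rule pb_jac[OF P F H smooth_DD[OF K] p])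
  show ?thesis using m1 m2 m3 d j1 j2 j3 by linarith
qed



lemma pb_comb:
  fixes P Q :: "('n::finite pt \<Rightarrow> real) \<Rightarrow> ('n pt \<Rightarrow> real) \<Rightarrow> 'n pt \<Rightarrow> real"
  assumes P: "poisson_bracket P" and Q: "poisson_bracket Q"
    and QL: "\<And>F H p. smooth_on MM F \<Longrightarrow> smooth_on MM H \<Longrightarrow> p \<in> MM \<Longrightarrow> Q F H p = lieD P F H p"
  shows "poisson_bracket (\<lambda>F H p. a * Q F H p + b * P F H p)"
proof -
  define C where "C = (\<lambda>F H p. a * Q F H p + b * P F H p)"
  have "poisson_bracket C"
    unfolding poisson_bracket_def
  proof (intro conjI allI impI ballI)
    fix F H :: "'n pt \<Rightarrow> real"
    assume F: "smooth_on MM F" and H: "smooth_on MM H"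
    show "smooth_on MM (C F H)" unfolding C_def by (intro smooth_lin pb_sm[OF Q] pb_sm[OF P] F H)
  next
    fix F H K :: "'n pt \<Rightarrow> real" and c d :: real and p :: "'n pt"
    assume F: "smooth_on MM F" and H: "smooth_on MM H" and K: "smooth_on MM K" and p: "p \<in> MM"
    show "C (\<lambda>q. c * F q + d * H q) K p = c * C F K p + d * C H K p"
      by (simp add: C_def pb_lin[OF Q F H K p] pb_lin[OF P F H K p] algebra_simps)
  next
    fix F H K :: "'n pt \<Rightarrow> real" and c d :: real and p :: "'n pt"
    assume F: "smooth_on MM F" and H: "smooth_on MM H" and K: "smooth_on MM K" and p: "p \<in> MM"
    show "C F H p = - C H F p"
      by (simp add: C_def pb_anti[OF Q F H p] pb_anti[OF P F H p])
  next
    fix F H K :: "'n pt \<Rightarrow> real" and c d :: real and p :: "'n pt"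
    assume F: "smooth_on MM F" and H: "smooth_on MM H" and K: "smooth_on MM K" and p: "p \<in> MM"
    show "C F (\<lambda>q. H q * K q) p = C F H p * K p + H p * C F K p"
      by (simp add: C_def pb_leib[OF Q F H K p] pb_leib[OF P F H K p] algebra_simps)
  next
    fix F H K :: "'n pt \<Rightarrow> real" and c d :: real and p :: "'n pt"
    assume F: "smooth_on MM F" and H: "smooth_on MM H" and K: "smooth_on MM K" and p: "p \<in> MM"
    have c: "C X (C Y Z) p = a*a*Q X (Q Y Z) p + a*b*Q X (P Y Z) p + b*a*P X (Q Y Z) p + b*b*P X (P Y Z) p"
      if X: "smooth_on MM X" and Y: "smooth_on MM Y" and Z: "smooth_on MM Z" for X Y Z
      by (simp add: C_def pb_lin2[OF Q X pb_sm[OF Q Y Z] pb_sm[OF P Y Z] p]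
          pb_lin2[OF P X pb_sm[OF Q Y Z] pb_sm[OF P Y Z] p] algebra_simps)
    have jq: "Q F (Q H K) p + Q H (Q K F) p + Q K (Q F H) p = 0" by (rule pb_jac[OF Q F H K p])
    have jp: "P F (P H K) p + P H (P K F) p + P K (P F H) p = 0" by (rule pb_jac[OF P F H K p])
    have mj: "(Q F (P H K) p + P F (Q H K) p) + (Q H (P K F) p + P H (Q K F) p) + (Q K (P F H) p + P K (Q F H) p) = 0"
      by (rule mixed_jacobi[OF P Q QL F H K p])
    have "C F (C H K) p + C H (C K F) p + C K (C F H) p =
      a*a*(Q F (Q H K) p + Q H (Q K F) p + Q K (Q F H) p)
      + b*b*(P F (P H K) p + P H (P K F) p + P K (P F H) p)
      + a*b*((Q F (P H K) p + P F (Q H K) p) + (Q H (P K F) p + P H (Q K F) p) + (Q K (P F H) p + P K (Q F H) p))"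
      by (simp add: c[OF F H K] c[OF H K F] c[OF K F H] algebra_simps)
    then show "C F (C H K) p + C H (C K F) p + C K (C F H) p = 0" by (simp add: jq jp mj)
  qed
  then show ?thesis by (simp add: C_def)
qed

theorem proposition2p2:
  assumes P1: "poisson_bracket (bracket1 :: ('n::{finite,linorder} pt \<Rightarrow> real) \<Rightarrow> _)"
      and P2: "poisson_bracket (bracket2 :: ('n::{finite,linorder} pt \<Rightarrow> real) \<Rightarrow> _)"
  shows "(\<forall>F H :: 'n pt \<Rightarrow> real. smooth_on MM F \<longrightarrow> smooth_on MM H \<longrightarrow>
            (\<forall>p\<in>MM. bracket1 F H p = lieD bracket2 F H p))
       \<and> (\<forall>a b :: real. poisson_bracket
            (\<lambda>(F :: 'n pt \<Rightarrow> real) H p. a * bracket1 F H p + b * bracket2 F H p))"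
proof (intro conjI allI impI ballI)
  fix F H :: "'n pt \<Rightarrow> real" and p :: "'n pt"
  assume "smooth_on MM F" "smooth_on MM H" "p \<in> MM"
  then show "bracket1 F H p = lieD bracket2 F H p" by (rule main_identity)
next
  fix a b :: real
  show "poisson_bracket (\<lambda>(F :: 'n pt \<Rightarrow> real) H p. a * bracket1 F H p + b * bracket2 F H p)"
    by (rule pb_comb[OF P2 P1 main_identity])
qed



end
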